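(* Let $\{W_n\}_{n\ge0}$ be an Appell monic polynomial sequence with cubic decomposition $W_{3n}(x)=P_n(x^3)+xa^1_{n-1}(x^3)+x^2a^2_{n-1}(x^3)$, $W_{3n+1}(x)=b^1_n(x^3)+xQ_n(x^3)+x^2b^2_{n-1}(x^3)$, $W_{3n+2}(x)=c^1_n(x^3)+xc^2_n(x^3)+x^2R_n(x^3)$ (components as in the context). (1) Either the three sequences $\{a^1_n\}_{n\ge0}$, $\{c^1_n\}_{n\ge0}$, $\{b^2_n\}_{n\ge0}$ are all identically the null sequence, or they are all non-null, and in this case there are a non-negative integer $\kappa$ and numerical sequences $\mu_{1,n},\mu_{2,n},\mu_{3,n}$ such that for $n\ge0$ $$b^2_{n+\kappa}(x)=\mu_{1,n}\hat b^2_n(x),\quad a^1_{n+\kappa}(x)=\mu_{2,n}\hat a^1_n(x),\quad c^1_{n+\kappa}(x)=\mu_{3,n}\hat c^1_n(x),$$ where $\{\hat a^1_n\},\{\hat c^1_n\},\{\hat b^2_n\}$ are monic polynomial sequences. (2) Either the three sequences $\{a^2_n\}_{n\ge0}$, $\{c^2_n\}_{n\ge0}$, $\{b^1_n\}_{n\ge0}$ are all identically null, or they are all non-null, and in this case there are a non-negative integer $\tau$ and numerical sequences $\alpha_{1,n},\alpha_{2,n},\alpha_{3,n}$ such that for $n\ge0$ $$a^2_{n+\tau}(x)=\alpha_{1,n}\hat a^2_n(x),\quad c^2_{n+\tau}(x)=\alpha_{2,n}\hat c^2_n(x),\quad b^1_{n+\tau}(x)=\alpha_{3,n}\hat b^1_n(x),$$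 where $\{\hat a^2_n\},\{\hat c^2_n\},\{\hat b^1_n\}$ are monic polynomial sequences. (3) Furthermore, there are two nonzero constants $b^2_\kappa$ and $a^2_\tau$ such that $\mu_{1,n}=\frac{(\kappa+\frac73)_n(\kappa+\frac53)_n}{(\frac43)_n(\frac53)_n}\binom{n+\kappa+1}{n}b^2_\kappa$ for $n\ge0$; $\mu_{2,n}=\frac{(\kappa+\frac73)_{n-1}(\kappa+\frac53)_n}{(\frac43)_n(\frac53)_{n-1}}\binom{n+\kappa+1}{n}b^2_\kappa$ for $n\ge1$; $\mu_{3,n}=\frac{(\kappa+\frac73)_{n-1}(\kappa+\frac53)_n}{(\frac43)_{n-1}(\frac53)_{n-1}}\binom{n+\kappa}{n}\frac{b^2_\kappa}{\kappa+1}$ for $n\ge1$; $\alpha_{1,n}=\frac{(\tau+\frac53)_n(\tau+\frac43)_n}{(\frac43)_n(\frac53)_n}\binom{n+\tau+1}{n}a^2_\tau$ for $n\ge0$; $\alpha_{2,n}=\frac{(\tau+\frac53)_n(\tau+\frac43)_n}{(\frac43)_n(\frac53)_{n-1}}\binom{n+\tau}{n}\frac{a^2_\tau}{\tau+1}$ for $n\ge1$; $\alpha_{3,n}=\frac{(\tau+\frac53)_{n-1}(\tau+\frac43)_n}{(\frac43)_{n-1}(\frac53)_{n-1}}\binom{n+\tau}{n}\frac{a^2_\tau}{\tau+1}$ for $n\ge1$; with $\mu_{2,0}=\frac{2b^2_\kappa}{3(\kappa+\frac43)}$, $\mu_{3,0}=\frac{2b^2_\kappa}{9(\kappa+1)(\kappa+\frac43)}$,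 $\alpha_{2,0}=\frac{2a^2_\tau}{3(\tau+1)}$, $\alpha_{3,0}=\frac{2a^2_\tau}{9(\tau+1)(\tau+\frac23)}$.
   Context: An MPS is a sequence $\{W_n\}_{n\ge0}$ of complex polynomials with $W_n$ monic of degree $n$; it is Appell if $W_{n+1}'=(n+1)W_n$ for $n\ge0$. Cubic decomposition: for any MPS there are unique polynomials with the displayed identities for all $n\ge0$, where $\{P_n\},\{Q_n\},\{R_n\}$ are MPSs and $\deg a^1_{n-1},\deg a^2_{n-1},\deg b^2_{n-1}\le n-1$, $\deg b^1_n,\deg c^1_n,\deg c^2_n\le n$, with $a^1_{-1}=a^2_{-1}=b^2_{-1}=0$. $(a)_n$ denotes the Pochhammer symbol $(a)_n=a(a+1)\cdots(a+n-1)$ for $n\ge1$, $(a)_0=1$. *)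

theory Defs
  imports "HOL-Computational_Algebra.Polynomial"
begin

definition MPS :: "(nat \<Rightarrow> complex poly) \<Rightarrow> bool" where
  "MPS W \<longleftrightarrow> (\<forall>n. degree (W n) = n \<and> lead_coeff (W n) = 1)"

definition Appell :: "(nat \<Rightarrow> complex poly) \<Rightarrow> bool" where
  "Appell W \<longleftrightarrow> MPS W \<and> (\<forall>n. pderiv (W (Suc n)) = smult (of_nat (Suc n)) (W n))"

definition cube_sub :: "complex poly \<Rightarrow> complex poly" where
  "cube_sub p = pcompose p (monom 1 3)"

end

theory Submission
  imports Defs "HOL-Computational_Algebra.Polynomial"
begin

lemma coeff_cube_sub:
  "coeff (cube_sub p) k = (if k mod 3 = 0 then coeff p (k div 3) else 0)"
  unfolding cube_sub_def
proof (induction p arbitrary: k)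
  case 0
  then show ?case by simp
next
  case (pCons a p)
  show ?case
  proof (cases "k < 3")
    case True
    then have "k = 0 \<or> k = 1 \<or> k = 2" by auto
    then show ?thesis by (auto simp: pcompose_pCons coeff_monom_mult coeff_pCons')
  next
    case False
    then obtain k' where k: "k = k' + 3" by (metis add.commute le_Suc_ex not_less)
    have e: "(k' + 3) mod 3 = k' mod 3" "(k'+3) div 3 = Suc (k' div 3)" by simp_all
    have "coeff (pCons a p \<circ>\<^sub>p monom 1 3) k = coeff (monom 1 3 * (p \<circ>\<^sub>p monom 1 3)) (k'+3)"
      using k by (simp add: pcompose_pCons coeff_pCons')
    also have "\<dots> = coeff (p \<circ>\<^sub>p monom 1 3) k'" by (simp add: coeff_monom_mult)
    finally show ?thesis using pCons.IH[of k'] k e by simp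
  qed
qed



lemma cs0: "coeff (cube_sub p) (3*j) = coeff p j" by (simp add: coeff_cube_sub)
lemma cs1: "coeff (cube_sub p) (3*j+1) = 0"
proof -
  have "(3*j+1) mod 3 = 1" by presburger
  then show ?thesis by (simp only: coeff_cube_sub) simp
qed
lemma cs2: "coeff (cube_sub p) (3*j+2) = 0"
proof -
  have "(3*j+2) mod 3 = 2" by presburger
  then show ?thesis by (simp only: coeff_cube_sub) simp
qed



lemma dec_coeffs:
  fixes A B C :: "complex poly"
  assumes "V = cube_sub A + [:0,1:] * cube_sub B + [:0,0,1:] * cube_sub C"
  shows "coeff V (3*j) = coeff A j" "coeff V (3*j+1) = coeff B j" "coeff V (3*j+2) = coeff C j"
proof -
  have x1: "[:0,1:] * cube_sub B = pCons 0 (cube_sub B)" by simp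
  have x2: "[:0,0,1:] * cube_sub C = pCons 0 (pCons 0 (cube_sub C))" by simp
  have V: "V = cube_sub A + pCons 0 (cube_sub B) + pCons 0 (pCons 0 (cube_sub C))"
    using assms unfolding x1 x2 .
  have g2: "coeff V (Suc (Suc k)) = coeff (cube_sub A) (Suc (Suc k)) + coeff (cube_sub B) (Suc k) + coeff (cube_sub C) k" for k
    unfolding V by simp
  have g1: "coeff V (Suc 0) = coeff (cube_sub A) (Suc 0) + coeff (cube_sub B) 0"
    unfolding V by simp
  have g0: "coeff V 0 = coeff (cube_sub A) 0"
    unfolding V by simp
  show "coeff V (3*j) = coeff A j"
  proof (cases j)
    case 0 then show ?thesis using g0 cs0[of A 0] by simp
  next
    case (Suc i)
    have e: "3*j = Suc (Suc (3*i+1))" "Suc (3*i+1) = 3*i+2" using Suc by simp_all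
    have "coeff V (3*j) = coeff (cube_sub A) (3*j) + coeff (cube_sub B) (3*i+2) + coeff (cube_sub C) (3*i+1)"
      using g2[of "3*i+1"] unfolding e(1)[symmetric] unfolding e(2) .
    then show ?thesis by (simp only: cs0 cs1 cs2) simp
  qed
  show "coeff V (3*j+1) = coeff B j"
  proof (cases j)
    case 0 then show ?thesis using g1 cs0[of B 0] cs1[of A 0] by simp
  next
    case (Suc i)
    have e: "3*j+1 = Suc (Suc (3*i+2))" "Suc (3*i+2) = 3*j" using Suc by simp_all
    have "coeff V (3*j+1) = coeff (cube_sub A) (3*j+1) + coeff (cube_sub B) (3*j) + coeff (cube_sub C) (3*i+2)"
      using g2[of "3*i+2"] unfolding e(1)[symmetric] unfolding e(2) .
    then show ?thesis by (simp only: cs0 cs1 cs2) simp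
  qed
  have e: "3*j+2 = Suc (Suc (3*j))" "Suc (3*j) = 3*j+1" by simp_all
  have "coeff V (3*j+2) = coeff (cube_sub A) (3*j+2) + coeff (cube_sub B) (3*j+1) + coeff (cube_sub C) (3*j)"
    using g2[of "3*j"] unfolding e(1)[symmetric] unfolding e(2) .
  then show "coeff V (3*j+2) = coeff C j" by (simp only: cs0 cs1 cs2) simp
qed


lemma appell_coeff:
  assumes "Appell W"
  shows "coeff (W n) j = of_nat (n choose j) * coeff (W (n-j)) 0"
proof (induction n arbitrary: j)
  case 0
  have "degree (W 0) = 0" using assms by (simp add: Appell_def MPS_def)
  then show ?case by (cases j) (auto simp: coeff_eq_0)
next
  case (Suc n)
  show ?case
  proof (cases j)
    case 0 then show ?thesis by simp
  next
    case (Suc i)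
    have d: "pderiv (W (Suc n)) = smult (of_nat (Suc n)) (W n)"
      using assms by (simp add: Appell_def)
    have "of_nat (Suc i) * coeff (W (Suc n)) (Suc i) = coeff (pderiv (W (Suc n))) i"
      by (simp add: coeff_pderiv)
    also have "\<dots> = of_nat (Suc n) * (of_nat (n choose i) * coeff (W (n-i)) 0)"
      using d Suc.IH by simp
    also have "\<dots> = of_nat (Suc i) * (of_nat (Suc n choose Suc i) * coeff (W (n-i)) 0)"
    proof -
      have h: "of_nat (Suc n) * of_nat (n choose i) = (of_nat (Suc n choose Suc i) * of_nat (Suc i) :: complex)"
        by (metis of_nat_mult Suc_times_binomial_eq)
      show ?thesis by (simp only: mult.assoc[symmetric] h) (simp only: ac_simps)
    qed
    finally have "coeff (W (Suc n)) (Suc i) = of_nat (Suc n choose Suc i) * coeff (W (n-i)) 0"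
      by (metis mult_cancel_left of_nat_eq_0_iff nat.distinct(1))
    then show ?thesis using Suc by simp
  qed
qed



lemma reidx:
  fixes w :: "nat \<Rightarrow> complex"
  assumes "r + t = s" "r \<le> 2"
  shows "of_nat ((3*m+s) choose (3*j+t)) * w (3*m+s-(3*j+t)) = of_nat ((3*m+s) choose (3*j+t)) * w (3*(m-j)+r)"
proof (cases "j \<le> m")
  case True
  then have "3*m+s-(3*j+t) = 3*(m-j)+r" using assms by (simp add: diff_mult_distrib2)
  then show ?thesis by simp
next
  case False
  then have "3*m+s < 3*j+t" using assms by simp
  then show ?thesis by simp
qed

lemma normalize:
  fixes X :: "nat \<Rightarrow> complex poly" and v :: "nat \<Rightarrow> complex"
  assumes cf: "\<And>m j. coeff (X m) j = of_nat ((3*m+s) choose (3*j+t)) * v (m-j)"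
    and ts: "t \<le> s" and st: "s \<le> t + 2" and vk: "v k \<noteq> 0" and below: "\<forall>i<k. v i = 0"
  shows "\<exists>h. MPS h \<and> (\<forall>n. X (n+k) = smult (of_nat ((3*(n+k)+s) choose (3*n+t)) * v k) (h n))"
proof -
  define c where "c n = (of_nat ((3*(n+k)+s) choose (3*n+t)) * v k :: complex)" for n
  have cnz: "c n \<noteq> 0" for n
    unfolding c_def using vk ts by simp
  have deg: "degree (X (n+k)) = n" and lc: "lead_coeff (X (n+k)) = c n" for n
  proof -
    have "coeff (X (n+k)) j = 0" if "j > n" for j
    proof (cases "j \<le> n+k")
      case True
      then have "n+k-j < k" using that by arith
      then show ?thesis using cf[of "n+k" j] below by simp
    next
      case False
      then have "3*(n+k)+s < 3*j+t" using st by arith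
      then show ?thesis using cf[of "n+k" j] by simp
    qed
    then have "degree (X (n+k)) \<le> n" by (simp add: degree_le)
    moreover have "coeff (X (n+k)) n = c n" using cf[of "n+k" n] by (simp add: c_def)
    ultimately show "degree (X (n+k)) = n"
      using cnz by (metis le_antisym le_degree)
    then show "lead_coeff (X (n+k)) = c n" using \<open>coeff (X (n+k)) n = c n\<close> by simp
  qed
  define h where "h n = smult (inverse (c n)) (X (n+k))" for n
  have "MPS h" unfolding MPS_def h_def using deg lc cnz by (simp add: lead_coeff_smult)
  moreover have "X (n+k) = smult (c n) (h n)" for n
    unfolding h_def using cnz by simp
  ultimately show ?thesis unfolding c_def by blast
qed

lemma null_iff:
  fixes X :: "nat \<Rightarrow> complex poly" and v :: "nat \<Rightarrow> complex"
  assumes cf: "\<And>m j. coeff (X m) j = of_nat ((3*m+s) choose (3*j+t)) * v (m-j)"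
    and ts: "t \<le> s"
  shows "(\<forall>m. X m = 0) \<longleftrightarrow> (\<forall>i. v i = 0)"
proof
  assume "\<forall>m. X m = 0"
  show "\<forall>i. v i = 0"
  proof
    fix i
    have "coeff (X i) 0 = 0" using \<open>\<forall>m. X m = 0\<close> by simp
    then show "v i = 0" using cf[of i 0] ts by simp
  qed
next
  assume "\<forall>i. v i = 0"
  then show "\<forall>m. X m = 0" using cf by (auto intro: poly_eqI)
qed




lemma bs: "(of_nat (Suc a choose Suc b) :: real) = of_nat (Suc a) / of_nat (Suc b) * of_nat (a choose b)"
proof -
  have "(of_nat (Suc a choose Suc b) :: real) * of_nat (Suc b) = of_nat (Suc a) * of_nat (a choose b)"
    by (metis of_nat_mult Suc_times_binomial_eq)
  then show ?thesis by (simp add: field_simps del: of_nat_Suc)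
qed

lemma bs3: "(of_nat ((a+3) choose (b+3)) :: real) =
   of_nat (a+1) * of_nat (a+2) * of_nat (a+3) / (of_nat (b+1) * of_nat (b+2) * of_nat (b+3)) * of_nat (a choose b)"
proof -
  have e: "a+3 = Suc (Suc (Suc a))" "b+3 = Suc (Suc (Suc b))" "a+2 = Suc (Suc a)" "b+2 = Suc (Suc b)" "a+1 = Suc a" "b+1 = Suc b" by simp_all
  show ?thesis unfolding e bs by (simp add: field_simps del: of_nat_Suc)
qed

lemma lhs_step: "(of_nat ((3*(Suc n+k)+s) choose (3*Suc n+t)) :: real) =
   of_nat (3*(n+k)+s+1) * of_nat (3*(n+k)+s+2) * of_nat (3*(n+k)+s+3) /
   (of_nat (3*n+t+1) * of_nat (3*n+t+2) * of_nat (3*n+t+3)) * of_nat ((3*(n+k)+s) choose (3*n+t))"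
proof -
  have "3*(Suc n+k)+s = (3*(n+k)+s)+3" "3*Suc n+t = (3*n+t)+3" by simp_all
  then show ?thesis by (simp only: bs3)
qed

lemma lhs_step0: "(of_nat ((3*(Suc n+k)+s) choose (3*Suc n)) :: real) =
   of_nat (3*(n+k)+s+1) * of_nat (3*(n+k)+s+2) * of_nat (3*(n+k)+s+3) /
   (of_nat (3*n+1) * of_nat (3*n+2) * of_nat (3*n+3)) * of_nat ((3*(n+k)+s) choose (3*n))"
  using lhs_step[of n k s 0] by simp

lemma rearr: "(x*a)*(y*b)/((z*c)*(w*d)) * (e/f*X) * K = (a*b*e/(c*d*f)) * (x*y/(z*w)*X*K)"
  for x a y b z c w d e f X K :: real
  by (simp add: divide_inverse ac_simps)

lemma pos_ne: "(c::real) > 0 \<Longrightarrow> c + of_nat m \<noteq> 0"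
  using of_nat_0_le_iff[of m, where 'a=real] by linarith

lemma bs1: "(of_nat ((a+1) choose (b+1)) :: real) = of_nat (a+1) / of_nat (b+1) * of_nat (a choose b)"
  using bs[of a b] by simp

lemma bs2: "(of_nat ((a+2) choose (b+2)) :: real) = of_nat (a+1) * of_nat (a+2) / (of_nat (b+1) * of_nat (b+2)) * of_nat (a choose b)"
proof -
  have e: "a+2 = Suc (Suc a)" "b+2 = Suc (Suc b)" by simp_all
  show ?thesis unfolding e bs by (simp add: field_simps del: of_nat_Suc)
qed

lemma I1: "(of_nat ((3*(n+k)+4) choose (3*n+2)) :: real) = pochhammer (of_nat k + 7/3) (n) * pochhammer (of_nat k + 5/3) (n) / (pochhammer (4/3) (n) * pochhammer (5/3) (n)) * of_nat ((n+k+1) choose n) * of_nat ((3*k+4) choose 2)" (is "?L n = ?R n")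
proof (induction n)
  case 0 then show ?case by (simp add: numeral_2_eq_2)
next
  case (Suc n)
  have c: "(of_nat ((Suc n+k+1) choose Suc n) :: real) = of_nat (n+k+2) / of_nat (n+1) * of_nat ((n+k+1) choose n)"
    using bs[of "n+k+1" n] by simp
  have d: "(4/3 + of_nat n) * (5/3 + of_nat n) * of_nat (n+1) \<noteq> (0::real)" "of_nat (3*n+2+1) * of_nat (3*n+2+2) * of_nat (3*n+2+3) \<noteq> (0::real)"
    using pos_ne[of "4/3" n] pos_ne[of "5/3" n] pos_ne[of "4/3" "Suc n"] pos_ne[of "5/3" "Suc n"] by simp_all
  have q: "((of_nat k + 7/3 + of_nat n) * (of_nat k + 5/3 + of_nat n) * of_nat (n+k+2) / ((4/3 + of_nat n) * (5/3 + of_nat n) * of_nat (n+1))) = ((of_nat (3*(n+k)+4+1) * of_nat (3*(n+k)+4+2) * of_nat (3*(n+k)+4+3) / (of_nat (3*n+2+1) * of_nat (3*n+2+2) * of_nat (3*n+2+3))) :: real)"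
    by (subst frac_eq_eq[OF d]) (simp add: field_simps)
  have r: "?R (Suc n) = ((of_nat k + 7/3 + of_nat n) * (of_nat k + 5/3 + of_nat n) * of_nat (n+k+2) / ((4/3 + of_nat n) * (5/3 + of_nat n) * of_nat (n+1))) * ?R n"
    by (simp only: c pochhammer_Suc[of "of_nat k + 7/3 :: real" "n"] pochhammer_Suc[of "of_nat k + 5/3 :: real" "n"] pochhammer_Suc[of "4/3 :: real" "n"] pochhammer_Suc[of "5/3 :: real" "n"]) (rule rearr)
  have "?L (Suc n) = (of_nat (3*(n+k)+4+1) * of_nat (3*(n+k)+4+2) * of_nat (3*(n+k)+4+3) / (of_nat (3*n+2+1) * of_nat (3*n+2+2) * of_nat (3*n+2+3))) * ?L n" by (rule lhs_step)
  also have "\<dots> = (of_nat (3*(n+k)+4+1) * of_nat (3*(n+k)+4+2) * of_nat (3*(n+k)+4+3) / (of_nat (3*n+2+1) * of_nat (3*n+2+2) * of_nat (3*n+2+3))) * ?R n" by (simp only: Suc.IH)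
  also have "\<dots> = ((of_nat k + 7/3 + of_nat n) * (of_nat k + 5/3 + of_nat n) * of_nat (n+k+2) / ((4/3 + of_nat n) * (5/3 + of_nat n) * of_nat (n+1))) * ?R n" by (simp only: q)
  also have "\<dots> = ?R (Suc n)" by (rule r[symmetric])
  finally show ?case .
qed

lemma I2: "(of_nat ((3*(Suc n+k)+3) choose (3*Suc n+1)) :: real) = pochhammer (of_nat k + 7/3) (n) * pochhammer (of_nat k + 5/3) (Suc n) / (pochhammer (4/3) (Suc n) * pochhammer (5/3) (n)) * of_nat ((Suc n+k+1) choose Suc n) * of_nat ((3*k+4) choose 2)" (is "?L n = ?R n")
proof (induction n)
  case 0 then show ?case proof -
    have e: "3*(Suc 0+k)+3 = (3*k+4)+2" "3*Suc 0+1 = 2+2" by simp_all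
    have h: "(of_nat ((3*(Suc 0+k)+3) choose (3*Suc 0+1)) :: real) = of_nat (3*k+4+1) * of_nat (3*k+4+2) / (of_nat (2+1) * of_nat (2+2)) * of_nat ((3*k+4) choose 2)"
      unfolding e by (rule bs2)
    then show ?case unfolding h by (simp add: field_simps del: binomial_Suc_Suc)
  qed
next
  case (Suc n)
  have c: "(of_nat ((Suc (Suc n)+k+1) choose Suc (Suc n)) :: real) = of_nat (Suc n+k+2) / of_nat (Suc n+1) * of_nat ((Suc n+k+1) choose Suc n)"
    using bs[of "Suc n+k+1" "Suc n"] by simp
  have d: "(4/3 + of_nat (Suc n)) * (5/3 + of_nat n) * of_nat (Suc n+1) \<noteq> (0::real)" "of_nat (3*Suc n+1+1) * of_nat (3*Suc n+1+2) * of_nat (3*Suc n+1+3) \<noteq> (0::real)"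
    using pos_ne[of "4/3" n] pos_ne[of "5/3" n] pos_ne[of "4/3" "Suc n"] pos_ne[of "5/3" "Suc n"] by simp_all
  have q: "((of_nat k + 7/3 + of_nat n) * (of_nat k + 5/3 + of_nat (Suc n)) * of_nat (Suc n+k+2) / ((4/3 + of_nat (Suc n)) * (5/3 + of_nat n) * of_nat (Suc n+1))) = ((of_nat (3*(Suc n+k)+3+1) * of_nat (3*(Suc n+k)+3+2) * of_nat (3*(Suc n+k)+3+3) / (of_nat (3*Suc n+1+1) * of_nat (3*Suc n+1+2) * of_nat (3*Suc n+1+3))) :: real)"
    by (subst frac_eq_eq[OF d]) (simp add: field_simps)
  have r: "?R (Suc n) = ((of_nat k + 7/3 + of_nat n) * (of_nat k + 5/3 + of_nat (Suc n)) * of_nat (Suc n+k+2) / ((4/3 + of_nat (Suc n)) * (5/3 + of_nat n) * of_nat (Suc n+1))) * ?R n"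
    by (simp only: c pochhammer_Suc[of "of_nat k + 7/3 :: real" "n"] pochhammer_Suc[of "of_nat k + 5/3 :: real" "Suc n"] pochhammer_Suc[of "4/3 :: real" "Suc n"] pochhammer_Suc[of "5/3 :: real" "n"]) (rule rearr)
  have "?L (Suc n) = (of_nat (3*(Suc n+k)+3+1) * of_nat (3*(Suc n+k)+3+2) * of_nat (3*(Suc n+k)+3+3) / (of_nat (3*Suc n+1+1) * of_nat (3*Suc n+1+2) * of_nat (3*Suc n+1+3))) * ?L n" by (rule lhs_step)
  also have "\<dots> = (of_nat (3*(Suc n+k)+3+1) * of_nat (3*(Suc n+k)+3+2) * of_nat (3*(Suc n+k)+3+3) / (of_nat (3*Suc n+1+1) * of_nat (3*Suc n+1+2) * of_nat (3*Suc n+1+3))) * ?R n" by (simp only: Suc.IH)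
  also have "\<dots> = ((of_nat k + 7/3 + of_nat n) * (of_nat k + 5/3 + of_nat (Suc n)) * of_nat (Suc n+k+2) / ((4/3 + of_nat (Suc n)) * (5/3 + of_nat n) * of_nat (Suc n+1))) * ?R n" by (simp only: q)
  also have "\<dots> = ?R (Suc n)" by (rule r[symmetric])
  finally show ?case .
qed

lemma I3: "(of_nat ((3*(Suc n+k)+2) choose (3*Suc n)) :: real) = pochhammer (of_nat k + 7/3) (n) * pochhammer (of_nat k + 5/3) (Suc n) / (pochhammer (4/3) (n) * pochhammer (5/3) (n)) * of_nat ((Suc n+k) choose Suc n) * (of_nat ((3*k+4) choose 2) / (of_nat k + 1))" (is "?L n = ?R n")
proof (induction n)
  case 0 then show ?case proof -
    have e: "3*(Suc 0+k)+2 = (3*k+4)+1" "3*Suc 0 = 2+1" by simp_all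
    have h: "(of_nat ((3*(Suc 0+k)+2) choose (3*Suc 0)) :: real) = of_nat (3*k+4+1) / of_nat (2+1) * of_nat ((3*k+4) choose 2)"
      unfolding e by (rule bs1)
    moreover have "(of_nat k + 1 :: real) \<noteq> 0" by simp
    ultimately show ?case unfolding h by (simp add: field_simps del: binomial_Suc_Suc)
  qed
next
  case (Suc n)
  have c: "(of_nat ((Suc (Suc n)+k) choose Suc (Suc n)) :: real) = of_nat (Suc n+k+1) / of_nat (Suc n+1) * of_nat ((Suc n+k) choose Suc n)"
    using bs[of "Suc n+k" "Suc n"] by simp
  have d: "(4/3 + of_nat n) * (5/3 + of_nat n) * of_nat (Suc n+1) \<noteq> (0::real)" "of_nat (3*Suc n+1) * of_nat (3*Suc n+2) * of_nat (3*Suc n+3) \<noteq> (0::real)"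
    using pos_ne[of "4/3" n] pos_ne[of "5/3" n] pos_ne[of "4/3" "Suc n"] pos_ne[of "5/3" "Suc n"] by simp_all
  have q: "((of_nat k + 7/3 + of_nat n) * (of_nat k + 5/3 + of_nat (Suc n)) * of_nat (Suc n+k+1) / ((4/3 + of_nat n) * (5/3 + of_nat n) * of_nat (Suc n+1))) = ((of_nat (3*(Suc n+k)+2+1) * of_nat (3*(Suc n+k)+2+2) * of_nat (3*(Suc n+k)+2+3) / (of_nat (3*Suc n+1) * of_nat (3*Suc n+2) * of_nat (3*Suc n+3))) :: real)"
    by (subst frac_eq_eq[OF d]) (simp add: field_simps)
  have r: "?R (Suc n) = ((of_nat k + 7/3 + of_nat n) * (of_nat k + 5/3 + of_nat (Suc n)) * of_nat (Suc n+k+1) / ((4/3 + of_nat n) * (5/3 + of_nat n) * of_nat (Suc n+1))) * ?R n"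
    by (simp only: c pochhammer_Suc[of "of_nat k + 7/3 :: real" "n"] pochhammer_Suc[of "of_nat k + 5/3 :: real" "Suc n"] pochhammer_Suc[of "4/3 :: real" "n"] pochhammer_Suc[of "5/3 :: real" "n"]) (rule rearr)
  have "?L (Suc n) = (of_nat (3*(Suc n+k)+2+1) * of_nat (3*(Suc n+k)+2+2) * of_nat (3*(Suc n+k)+2+3) / (of_nat (3*Suc n+1) * of_nat (3*Suc n+2) * of_nat (3*Suc n+3))) * ?L n" by (rule lhs_step0)
  also have "\<dots> = (of_nat (3*(Suc n+k)+2+1) * of_nat (3*(Suc n+k)+2+2) * of_nat (3*(Suc n+k)+2+3) / (of_nat (3*Suc n+1) * of_nat (3*Suc n+2) * of_nat (3*Suc n+3))) * ?R n" by (simp only: Suc.IH)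
  also have "\<dots> = ((of_nat k + 7/3 + of_nat n) * (of_nat k + 5/3 + of_nat (Suc n)) * of_nat (Suc n+k+1) / ((4/3 + of_nat n) * (5/3 + of_nat n) * of_nat (Suc n+1))) * ?R n" by (simp only: q)
  also have "\<dots> = ?R (Suc n)" by (rule r[symmetric])
  finally show ?case .
qed

lemma I4: "(of_nat ((3*(n+k)+3) choose (3*n+2)) :: real) = pochhammer (of_nat k + 5/3) (n) * pochhammer (of_nat k + 4/3) (n) / (pochhammer (4/3) (n) * pochhammer (5/3) (n)) * of_nat ((n+k+1) choose n) * of_nat ((3*k+3) choose 2)" (is "?L n = ?R n")
proof (induction n)
  case 0 then show ?case by (simp add: numeral_2_eq_2)
next
  case (Suc n)
  have c: "(of_nat ((Suc n+k+1) choose Suc n) :: real) = of_nat (n+k+2) / of_nat (n+1) * of_nat ((n+k+1) choose n)"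
    using bs[of "n+k+1" n] by simp
  have d: "(4/3 + of_nat n) * (5/3 + of_nat n) * of_nat (n+1) \<noteq> (0::real)" "of_nat (3*n+2+1) * of_nat (3*n+2+2) * of_nat (3*n+2+3) \<noteq> (0::real)"
    using pos_ne[of "4/3" n] pos_ne[of "5/3" n] pos_ne[of "4/3" "Suc n"] pos_ne[of "5/3" "Suc n"] by simp_all
  have q: "((of_nat k + 5/3 + of_nat n) * (of_nat k + 4/3 + of_nat n) * of_nat (n+k+2) / ((4/3 + of_nat n) * (5/3 + of_nat n) * of_nat (n+1))) = ((of_nat (3*(n+k)+3+1) * of_nat (3*(n+k)+3+2) * of_nat (3*(n+k)+3+3) / (of_nat (3*n+2+1) * of_nat (3*n+2+2) * of_nat (3*n+2+3))) :: real)"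
    by (subst frac_eq_eq[OF d]) (simp add: field_simps)
  have r: "?R (Suc n) = ((of_nat k + 5/3 + of_nat n) * (of_nat k + 4/3 + of_nat n) * of_nat (n+k+2) / ((4/3 + of_nat n) * (5/3 + of_nat n) * of_nat (n+1))) * ?R n"
    by (simp only: c pochhammer_Suc[of "of_nat k + 5/3 :: real" "n"] pochhammer_Suc[of "of_nat k + 4/3 :: real" "n"] pochhammer_Suc[of "4/3 :: real" "n"] pochhammer_Suc[of "5/3 :: real" "n"]) (rule rearr)
  have "?L (Suc n) = (of_nat (3*(n+k)+3+1) * of_nat (3*(n+k)+3+2) * of_nat (3*(n+k)+3+3) / (of_nat (3*n+2+1) * of_nat (3*n+2+2) * of_nat (3*n+2+3))) * ?L n" by (rule lhs_step)
  also have "\<dots> = (of_nat (3*(n+k)+3+1) * of_nat (3*(n+k)+3+2) * of_nat (3*(n+k)+3+3) / (of_nat (3*n+2+1) * of_nat (3*n+2+2) * of_nat (3*n+2+3))) * ?R n" by (simp only: Suc.IH)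
  also have "\<dots> = ((of_nat k + 5/3 + of_nat n) * (of_nat k + 4/3 + of_nat n) * of_nat (n+k+2) / ((4/3 + of_nat n) * (5/3 + of_nat n) * of_nat (n+1))) * ?R n" by (simp only: q)
  also have "\<dots> = ?R (Suc n)" by (rule r[symmetric])
  finally show ?case .
qed

lemma I5: "(of_nat ((3*(Suc n+k)+2) choose (3*Suc n+1)) :: real) = pochhammer (of_nat k + 5/3) (Suc n) * pochhammer (of_nat k + 4/3) (Suc n) / (pochhammer (4/3) (Suc n) * pochhammer (5/3) (n)) * of_nat ((Suc n+k) choose Suc n) * (of_nat ((3*k+3) choose 2) / (of_nat k + 1))" (is "?L n = ?R n")
proof (induction n)
  case 0 then show ?case proof -
    have e: "3*(Suc 0+k)+2 = (3*k+3)+2" "3*Suc 0+1 = 2+2" by simp_all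
    have h: "(of_nat ((3*(Suc 0+k)+2) choose (3*Suc 0+1)) :: real) = of_nat (3*k+3+1) * of_nat (3*k+3+2) / (of_nat (2+1) * of_nat (2+2)) * of_nat ((3*k+3) choose 2)"
      unfolding e by (rule bs2)
    moreover have "(of_nat k + 1 :: real) \<noteq> 0" by simp
    ultimately show ?case unfolding h by (simp add: field_simps del: binomial_Suc_Suc)
  qed
next
  case (Suc n)
  have c: "(of_nat ((Suc (Suc n)+k) choose Suc (Suc n)) :: real) = of_nat (Suc n+k+1) / of_nat (Suc n+1) * of_nat ((Suc n+k) choose Suc n)"
    using bs[of "Suc n+k" "Suc n"] by simp
  have d: "(4/3 + of_nat (Suc n)) * (5/3 + of_nat n) * of_nat (Suc n+1) \<noteq> (0::real)" "of_nat (3*Suc n+1+1) * of_nat (3*Suc n+1+2) * of_nat (3*Suc n+1+3) \<noteq> (0::real)"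
    using pos_ne[of "4/3" n] pos_ne[of "5/3" n] pos_ne[of "4/3" "Suc n"] pos_ne[of "5/3" "Suc n"] by simp_all
  have q: "((of_nat k + 5/3 + of_nat (Suc n)) * (of_nat k + 4/3 + of_nat (Suc n)) * of_nat (Suc n+k+1) / ((4/3 + of_nat (Suc n)) * (5/3 + of_nat n) * of_nat (Suc n+1))) = ((of_nat (3*(Suc n+k)+2+1) * of_nat (3*(Suc n+k)+2+2) * of_nat (3*(Suc n+k)+2+3) / (of_nat (3*Suc n+1+1) * of_nat (3*Suc n+1+2) * of_nat (3*Suc n+1+3))) :: real)"
    by (subst frac_eq_eq[OF d]) (simp add: field_simps)
  have r: "?R (Suc n) = ((of_nat k + 5/3 + of_nat (Suc n)) * (of_nat k + 4/3 + of_nat (Suc n)) * of_nat (Suc n+k+1) / ((4/3 + of_nat (Suc n)) * (5/3 + of_nat n) * of_nat (Suc n+1))) * ?R n"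
    by (simp only: c pochhammer_Suc[of "of_nat k + 5/3 :: real" "Suc n"] pochhammer_Suc[of "of_nat k + 4/3 :: real" "Suc n"] pochhammer_Suc[of "4/3 :: real" "Suc n"] pochhammer_Suc[of "5/3 :: real" "n"]) (rule rearr)
  have "?L (Suc n) = (of_nat (3*(Suc n+k)+2+1) * of_nat (3*(Suc n+k)+2+2) * of_nat (3*(Suc n+k)+2+3) / (of_nat (3*Suc n+1+1) * of_nat (3*Suc n+1+2) * of_nat (3*Suc n+1+3))) * ?L n" by (rule lhs_step)
  also have "\<dots> = (of_nat (3*(Suc n+k)+2+1) * of_nat (3*(Suc n+k)+2+2) * of_nat (3*(Suc n+k)+2+3) / (of_nat (3*Suc n+1+1) * of_nat (3*Suc n+1+2) * of_nat (3*Suc n+1+3))) * ?R n" by (simp only: Suc.IH)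
  also have "\<dots> = ((of_nat k + 5/3 + of_nat (Suc n)) * (of_nat k + 4/3 + of_nat (Suc n)) * of_nat (Suc n+k+1) / ((4/3 + of_nat (Suc n)) * (5/3 + of_nat n) * of_nat (Suc n+1))) * ?R n" by (simp only: q)
  also have "\<dots> = ?R (Suc n)" by (rule r[symmetric])
  finally show ?case .
qed

lemma I6: "(of_nat ((3*(Suc n+k)+1) choose (3*Suc n)) :: real) = pochhammer (of_nat k + 5/3) (n) * pochhammer (of_nat k + 4/3) (Suc n) / (pochhammer (4/3) (n) * pochhammer (5/3) (n)) * of_nat ((Suc n+k) choose Suc n) * (of_nat ((3*k+3) choose 2) / (of_nat k + 1))" (is "?L n = ?R n")
proof (induction n)
  case 0 then show ?case proof -
    have e: "3*(Suc 0+k)+1 = (3*k+3)+1" "3*Suc 0 = 2+1" by simp_all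
    have h: "(of_nat ((3*(Suc 0+k)+1) choose (3*Suc 0)) :: real) = of_nat (3*k+3+1) / of_nat (2+1) * of_nat ((3*k+3) choose 2)"
      unfolding e by (rule bs1)
    moreover have "(of_nat k + 1 :: real) \<noteq> 0" by simp
    ultimately show ?case unfolding h by (simp add: field_simps del: binomial_Suc_Suc)
  qed
next
  case (Suc n)
  have c: "(of_nat ((Suc (Suc n)+k) choose Suc (Suc n)) :: real) = of_nat (Suc n+k+1) / of_nat (Suc n+1) * of_nat ((Suc n+k) choose Suc n)"
    using bs[of "Suc n+k" "Suc n"] by simp
  have d: "(4/3 + of_nat n) * (5/3 + of_nat n) * of_nat (Suc n+1) \<noteq> (0::real)" "of_nat (3*Suc n+1) * of_nat (3*Suc n+2) * of_nat (3*Suc n+3) \<noteq> (0::real)"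
    using pos_ne[of "4/3" n] pos_ne[of "5/3" n] pos_ne[of "4/3" "Suc n"] pos_ne[of "5/3" "Suc n"] by simp_all
  have q: "((of_nat k + 5/3 + of_nat n) * (of_nat k + 4/3 + of_nat (Suc n)) * of_nat (Suc n+k+1) / ((4/3 + of_nat n) * (5/3 + of_nat n) * of_nat (Suc n+1))) = ((of_nat (3*(Suc n+k)+1+1) * of_nat (3*(Suc n+k)+1+2) * of_nat (3*(Suc n+k)+1+3) / (of_nat (3*Suc n+1) * of_nat (3*Suc n+2) * of_nat (3*Suc n+3))) :: real)"
    by (subst frac_eq_eq[OF d]) (simp add: field_simps)
  have r: "?R (Suc n) = ((of_nat k + 5/3 + of_nat n) * (of_nat k + 4/3 + of_nat (Suc n)) * of_nat (Suc n+k+1) / ((4/3 + of_nat n) * (5/3 + of_nat n) * of_nat (Suc n+1))) * ?R n"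
    by (simp only: c pochhammer_Suc[of "of_nat k + 5/3 :: real" "n"] pochhammer_Suc[of "of_nat k + 4/3 :: real" "Suc n"] pochhammer_Suc[of "4/3 :: real" "n"] pochhammer_Suc[of "5/3 :: real" "n"]) (rule rearr)
  have "?L (Suc n) = (of_nat (3*(Suc n+k)+1+1) * of_nat (3*(Suc n+k)+1+2) * of_nat (3*(Suc n+k)+1+3) / (of_nat (3*Suc n+1) * of_nat (3*Suc n+2) * of_nat (3*Suc n+3))) * ?L n" by (rule lhs_step0)
  also have "\<dots> = (of_nat (3*(Suc n+k)+1+1) * of_nat (3*(Suc n+k)+1+2) * of_nat (3*(Suc n+k)+1+3) / (of_nat (3*Suc n+1) * of_nat (3*Suc n+2) * of_nat (3*Suc n+3))) * ?R n" by (simp only: Suc.IH)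
  also have "\<dots> = ((of_nat k + 5/3 + of_nat n) * (of_nat k + 4/3 + of_nat (Suc n)) * of_nat (Suc n+k+1) / ((4/3 + of_nat n) * (5/3 + of_nat n) * of_nat (Suc n+1))) * ?R n" by (simp only: q)
  also have "\<dots> = ?R (Suc n)" by (rule r[symmetric])
  finally show ?case .
qed

lemma B2: "(of_nat ((3*(0+k)+3) choose (3*0+1)) :: real) = 2 * of_nat ((3*k+4) choose 2) / (3 * (of_nat k + 4/3))"
proof -
  have e: "3*k+2+2 = 3*k+4" "(0::nat)+2 = 2" "3*k+2+1 = 3*k+3" "(0::nat)+1 = 1" by simp_all
  have h0: "(of_nat ((3*k+4) choose 2) :: real) = of_nat (3*k+3) * of_nat (3*k+4) / (of_nat 1 * of_nat 2) * of_nat ((3*k+2) choose 0)"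
    using bs2[of "3*k+2" 0] unfolding e .
  have h: "(of_nat ((3*k+4) choose 2) :: real) = of_nat (3*k+3) * of_nat (3*k+4) / 2"
    using h0 by (simp only: binomial_n_0 of_nat_1 of_nat_numeral mult_1 mult_1_right)
  have "(of_nat k + 4/3 :: real) \<noteq> 0" using pos_ne[of "4/3" k] by (simp add: add.commute)
  then show ?thesis unfolding h by (simp add: field_simps)
qed

lemma B3: "(of_nat ((3*(0+k)+2) choose (3*0+0)) :: real) = 2 * of_nat ((3*k+4) choose 2) / (9 * (of_nat k + 1) * (of_nat k + 4/3))"
proof -
  have e: "3*k+2+2 = 3*k+4" "(0::nat)+2 = 2" "3*k+2+1 = 3*k+3" "(0::nat)+1 = 1" by simp_all
  have h0: "(of_nat ((3*k+4) choose 2) :: real) = of_nat (3*k+3) * of_nat (3*k+4) / (of_nat 1 * of_nat 2) * of_nat ((3*k+2) choose 0)"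
    using bs2[of "3*k+2" 0] unfolding e .
  have h: "(of_nat ((3*k+4) choose 2) :: real) = of_nat (3*k+3) * of_nat (3*k+4) / 2"
    using h0 by (simp only: binomial_n_0 of_nat_1 of_nat_numeral mult_1 mult_1_right)
  have "(of_nat k + 4/3 :: real) \<noteq> 0" "(of_nat k + 1 :: real) \<noteq> 0" using pos_ne[of "4/3" k] pos_ne[of "1" k] by (simp_all add: add.commute)
  then have Dnz: "9 * (of_nat k + 1) * (of_nat k + 4/3) \<noteq> (0::real)" by simp
  show ?thesis unfolding h by (simp only: eq_divide_eq Dnz not_False_eq_True if_True) (simp add: field_simps)
qed

lemma B5: "(of_nat ((3*(0+k)+2) choose (3*0+1)) :: real) = 2 * of_nat ((3*k+3) choose 2) / (3 * (of_nat k + 1))"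
proof -
  have e: "3*k+1+2 = 3*k+3" "(0::nat)+2 = 2" "3*k+1+1 = 3*k+2" "(0::nat)+1 = 1" by simp_all
  have h0: "(of_nat ((3*k+3) choose 2) :: real) = of_nat (3*k+2) * of_nat (3*k+3) / (of_nat 1 * of_nat 2) * of_nat ((3*k+1) choose 0)"
    using bs2[of "3*k+1" 0] unfolding e .
  have h: "(of_nat ((3*k+3) choose 2) :: real) = of_nat (3*k+2) * of_nat (3*k+3) / 2"
    using h0 by (simp only: binomial_n_0 of_nat_1 of_nat_numeral mult_1 mult_1_right)
  have "(of_nat k + 1 :: real) \<noteq> 0" using pos_ne[of "1" k] by (simp_all add: add.commute)
  then show ?thesis unfolding h by (simp add: field_simps)
qed

lemma B6: "(of_nat ((3*(0+k)+1) choose (3*0+0)) :: real) = 2 * of_nat ((3*k+3) choose 2) / (9 * (of_nat k + 1) * (of_nat k + 2/3))"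
proof -
  have e: "3*k+1+2 = 3*k+3" "(0::nat)+2 = 2" "3*k+1+1 = 3*k+2" "(0::nat)+1 = 1" by simp_all
  have h0: "(of_nat ((3*k+3) choose 2) :: real) = of_nat (3*k+2) * of_nat (3*k+3) / (of_nat 1 * of_nat 2) * of_nat ((3*k+1) choose 0)"
    using bs2[of "3*k+1" 0] unfolding e .
  have h: "(of_nat ((3*k+3) choose 2) :: real) = of_nat (3*k+2) * of_nat (3*k+3) / 2"
    using h0 by (simp only: binomial_n_0 of_nat_1 of_nat_numeral mult_1 mult_1_right)
  have "(of_nat k + 2/3 :: real) \<noteq> 0" "(of_nat k + 1 :: real) \<noteq> 0" using pos_ne[of "2/3" k] pos_ne[of "1" k] by (simp_all add: add.commute)
  then have Dnz: "9 * (of_nat k + 1) * (of_nat k + 2/3) \<noteq> (0::real)" by simp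
  show ?thesis unfolding h by (simp only: eq_divide_eq Dnz not_False_eq_True if_True) (simp add: field_simps)
qed

lemma I1c: "(of_nat ((3*(n+k)+4) choose (3*n+2)) :: complex) = pochhammer (of_nat k + 7/3) (n) * pochhammer (of_nat k + 5/3) (n) / (pochhammer (4/3) (n) * pochhammer (5/3) (n)) * of_nat ((n+k+1) choose n) * of_nat ((3*k+4) choose 2)"
  using arg_cong[OF I1[of n k], of complex_of_real]
  by (simp add: pochhammer_of_real[symmetric] del: binomial_Suc_Suc)

lemma I2c: "(of_nat ((3*(Suc n+k)+3) choose (3*Suc n+1)) :: complex) = pochhammer (of_nat k + 7/3) (n) * pochhammer (of_nat k + 5/3) (Suc n) / (pochhammer (4/3) (Suc n) * pochhammer (5/3) (n)) * of_nat ((Suc n+k+1) choose Suc n) * of_nat ((3*k+4) choose 2)"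
  using arg_cong[OF I2[of n k], of complex_of_real]
  by (simp add: pochhammer_of_real[symmetric] del: binomial_Suc_Suc)

lemma I3c: "(of_nat ((3*(Suc n+k)+2) choose (3*Suc n)) :: complex) = pochhammer (of_nat k + 7/3) (n) * pochhammer (of_nat k + 5/3) (Suc n) / (pochhammer (4/3) (n) * pochhammer (5/3) (n)) * of_nat ((Suc n+k) choose Suc n) * (of_nat ((3*k+4) choose 2) / (of_nat k + 1))"
  using arg_cong[OF I3[of n k], of complex_of_real]
  by (simp add: pochhammer_of_real[symmetric] del: binomial_Suc_Suc)

lemma I4c: "(of_nat ((3*(n+k)+3) choose (3*n+2)) :: complex) = pochhammer (of_nat k + 5/3) (n) * pochhammer (of_nat k + 4/3) (n) / (pochhammer (4/3) (n) * pochhammer (5/3) (n)) * of_nat ((n+k+1) choose n) * of_nat ((3*k+3) choose 2)"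
  using arg_cong[OF I4[of n k], of complex_of_real]
  by (simp add: pochhammer_of_real[symmetric] del: binomial_Suc_Suc)

lemma I5c: "(of_nat ((3*(Suc n+k)+2) choose (3*Suc n+1)) :: complex) = pochhammer (of_nat k + 5/3) (Suc n) * pochhammer (of_nat k + 4/3) (Suc n) / (pochhammer (4/3) (Suc n) * pochhammer (5/3) (n)) * of_nat ((Suc n+k) choose Suc n) * (of_nat ((3*k+3) choose 2) / (of_nat k + 1))"
  using arg_cong[OF I5[of n k], of complex_of_real]
  by (simp add: pochhammer_of_real[symmetric] del: binomial_Suc_Suc)

lemma I6c: "(of_nat ((3*(Suc n+k)+1) choose (3*Suc n)) :: complex) = pochhammer (of_nat k + 5/3) (n) * pochhammer (of_nat k + 4/3) (Suc n) / (pochhammer (4/3) (n) * pochhammer (5/3) (n)) * of_nat ((Suc n+k) choose Suc n) * (of_nat ((3*k+3) choose 2) / (of_nat k + 1))"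
  using arg_cong[OF I6[of n k], of complex_of_real]
  by (simp add: pochhammer_of_real[symmetric] del: binomial_Suc_Suc)

lemma B2c: "(of_nat ((3*(0+k)+3) choose (3*0+1)) :: complex) = 2 * of_nat ((3*k+4) choose 2) / (3 * (of_nat k + 4/3))"
  using arg_cong[OF B2[of k], of complex_of_real]
  by (simp add: pochhammer_of_real[symmetric] del: binomial_Suc_Suc)

lemma B3c: "(of_nat ((3*(0+k)+2) choose (3*0+0)) :: complex) = 2 * of_nat ((3*k+4) choose 2) / (9 * (of_nat k + 1) * (of_nat k + 4/3))"
  using arg_cong[OF B3[of k], of complex_of_real]
  by (simp add: pochhammer_of_real[symmetric] del: binomial_Suc_Suc)

lemma B5c: "(of_nat ((3*(0+k)+2) choose (3*0+1)) :: complex) = 2 * of_nat ((3*k+3) choose 2) / (3 * (of_nat k + 1))"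
  using arg_cong[OF B5[of k], of complex_of_real]
  by (simp add: pochhammer_of_real[symmetric] del: binomial_Suc_Suc)

lemma B6c: "(of_nat ((3*(0+k)+1) choose (3*0+0)) :: complex) = 2 * of_nat ((3*k+3) choose 2) / (9 * (of_nat k + 1) * (of_nat k + 2/3))"
  using arg_cong[OF B6[of k], of complex_of_real]
  by (simp add: pochhammer_of_real[symmetric] del: binomial_Suc_Suc)

lemma rr_div: "(x * (c / d)) * v = x * (c * v / d)" for x c d v :: complex
  by (simp add: divide_inverse ac_simps)

lemma rr_div2: "(a * c / d) * v = a * (c * v) / d" for a c d v :: complex
  by (simp add: divide_inverse ac_simps)

theorem theorem2:
  fixes W P Q R a1 a2 b1 b2 c1 c2 :: "nat \<Rightarrow> complex poly"
  assumes appell: "Appell W"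
    and mps: "MPS P" "MPS Q" "MPS R"
    and deg_a1: "\<And>n. degree (a1 n) \<le> n"
    and deg_a2: "\<And>n. degree (a2 n) \<le> n"
    and deg_b2: "\<And>n. degree (b2 n) \<le> n"
    and deg_b1: "\<And>n. degree (b1 n) \<le> n"
    and deg_c1: "\<And>n. degree (c1 n) \<le> n"
    and deg_c2: "\<And>n. degree (c2 n) \<le> n"
    and dec0: "\<And>n. W (3*n) = cube_sub (P n)
                 + [:0,1:] * cube_sub (if n = 0 then 0 else a1 (n-1))
                 + [:0,0,1:] * cube_sub (if n = 0 then 0 else a2 (n-1))"
    and dec1: "\<And>n. W (3*n+1) = cube_sub (b1 n)
                 + [:0,1:] * cube_sub (Q n)
                 + [:0,0,1:] * cube_sub (if n = 0 then 0 else b2 (n-1))"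
    and dec2: "\<And>n. W (3*n+2) = cube_sub (c1 n)
                 + [:0,1:] * cube_sub (c2 n)
                 + [:0,0,1:] * cube_sub (R n)"
  shows
   "((((\<forall>n. a1 n = 0) \<and> (\<forall>n. c1 n = 0) \<and> (\<forall>n. b2 n = 0))
    \<or> ((\<exists>n. a1 n \<noteq> 0) \<and> (\<exists>n. c1 n \<noteq> 0) \<and> (\<exists>n. b2 n \<noteq> 0) \<and>
       (\<exists>(\<kappa>::nat) (\<mu>1::nat \<Rightarrow> complex) (\<mu>2::nat \<Rightarrow> complex) (\<mu>3::nat \<Rightarrow> complex)
          (hb2::nat \<Rightarrow> complex poly) (ha1::nat \<Rightarrow> complex poly) (hc1::nat \<Rightarrow> complex poly).
          MPS hb2 \<and> MPS ha1 \<and> MPS hc1 \<and>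
          (\<forall>n. b2 (n+\<kappa>) = smult (\<mu>1 n) (hb2 n)) \<and>
          (\<forall>n. a1 (n+\<kappa>) = smult (\<mu>2 n) (ha1 n)) \<and>
          (\<forall>n. c1 (n+\<kappa>) = smult (\<mu>3 n) (hc1 n)) \<and>
          (\<exists>\<beta>::complex. \<beta> \<noteq> 0 \<and>
            (\<forall>n. \<mu>1 n = pochhammer (of_nat \<kappa> + 7/3) n * pochhammer (of_nat \<kappa> + 5/3) n
                   / (pochhammer (4/3) n * pochhammer (5/3) n)
                   * of_nat ((n+\<kappa>+1) choose n) * \<beta>) \<and>
            (\<forall>n\<ge>1. \<mu>2 n = pochhammer (of_nat \<kappa> + 7/3) (n-1) * pochhammer (of_nat \<kappa> + 5/3) n
                   / (pochhammer (4/3) n * pochhammer (5/3) (n-1))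
                   * of_nat ((n+\<kappa>+1) choose n) * \<beta>) \<and>
            (\<forall>n\<ge>1. \<mu>3 n = pochhammer (of_nat \<kappa> + 7/3) (n-1) * pochhammer (of_nat \<kappa> + 5/3) n
                   / (pochhammer (4/3) (n-1) * pochhammer (5/3) (n-1))
                   * of_nat ((n+\<kappa>) choose n) * (\<beta> / (of_nat \<kappa> + 1))) \<and>
            \<mu>2 0 = 2 * \<beta> / (3 * (of_nat \<kappa> + 4/3)) \<and>
            \<mu>3 0 = 2 * \<beta> / (9 * (of_nat \<kappa> + 1) * (of_nat \<kappa> + 4/3))))))
   \<and>
   (((\<forall>n. a2 n = 0) \<and> (\<forall>n. c2 n = 0) \<and> (\<forall>n. b1 n = 0))
    \<or> ((\<exists>n. a2 n \<noteq> 0) \<and> (\<exists>n. c2 n \<noteq> 0) \<and> (\<exists>n. b1 n \<noteq> 0) \<and>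
       (\<exists>(\<tau>::nat) (\<alpha>1::nat \<Rightarrow> complex) (\<alpha>2::nat \<Rightarrow> complex) (\<alpha>3::nat \<Rightarrow> complex)
          (ha2::nat \<Rightarrow> complex poly) (hc2::nat \<Rightarrow> complex poly) (hb1::nat \<Rightarrow> complex poly).
          MPS ha2 \<and> MPS hc2 \<and> MPS hb1 \<and>
          (\<forall>n. a2 (n+\<tau>) = smult (\<alpha>1 n) (ha2 n)) \<and>
          (\<forall>n. c2 (n+\<tau>) = smult (\<alpha>2 n) (hc2 n)) \<and>
          (\<forall>n. b1 (n+\<tau>) = smult (\<alpha>3 n) (hb1 n)) \<and>
          (\<exists>\<gamma>::complex. \<gamma> \<noteq> 0 \<and>
            (\<forall>n. \<alpha>1 n = pochhammer (of_nat \<tau> + 5/3) n * pochhammer (of_nat \<tau> + 4/3) n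
                   / (pochhammer (4/3) n * pochhammer (5/3) n)
                   * of_nat ((n+\<tau>+1) choose n) * \<gamma>) \<and>
            (\<forall>n\<ge>1. \<alpha>2 n = pochhammer (of_nat \<tau> + 5/3) n * pochhammer (of_nat \<tau> + 4/3) n
                   / (pochhammer (4/3) n * pochhammer (5/3) (n-1))
                   * of_nat ((n+\<tau>) choose n) * (\<gamma> / (of_nat \<tau> + 1))) \<and>
            (\<forall>n\<ge>1. \<alpha>3 n = pochhammer (of_nat \<tau> + 5/3) (n-1) * pochhammer (of_nat \<tau> + 4/3) n
                   / (pochhammer (4/3) (n-1) * pochhammer (5/3) (n-1))
                   * of_nat ((n+\<tau>) choose n) * (\<gamma> / (of_nat \<tau> + 1))) \<and>
            \<alpha>2 0 = 2 * \<gamma> / (3 * (of_nat \<tau> + 1)) \<and>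
            \<alpha>3 0 = 2 * \<gamma> / (9 * (of_nat \<tau> + 1) * (of_nat \<tau> + 2/3)))))))"
proof -
  define w where "w k = coeff (W k) 0" for k
  have AC: "coeff (W N) K = of_nat (N choose K) * w (N-K)" for N K
    unfolding w_def by (rule appell_coeff[OF appell])
  have D0: "W (3*m+3) = cube_sub (P (Suc m)) + [:0,1:] * cube_sub (a1 m) + [:0,0,1:] * cube_sub (a2 m)" for m
  proof -
    have e: "3 * Suc m = 3*m+3" by simp
    have i1: "(if Suc m = 0 then 0 else a1 (Suc m - 1)) = a1 m" by simp
    have i2: "(if Suc m = 0 then 0 else a2 (Suc m - 1)) = a2 m" by simp
    show ?thesis using dec0[of "Suc m"] unfolding e i1 i2 .
  qed
  have D1: "W (3*m+4) = cube_sub (b1 (Suc m)) + [:0,1:] * cube_sub (Q (Suc m)) + [:0,0,1:] * cube_sub (b2 m)" for m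
  proof -
    have e: "3 * Suc m + 1 = 3*m+4" by simp
    have i1: "(if Suc m = 0 then 0 else b2 (Suc m - 1)) = b2 m" by simp
    show ?thesis using dec1[of "Suc m"] unfolding e i1 .
  qed
  define v1 where "v1 i = w (3*i+2)" for i
  define v2 where "v2 i = w (3*i+1)" for i
  have cf_a1: "coeff (a1 m) j = of_nat ((3*m+3) choose (3*j+1)) * v1 (m-j)" for m j
  proof -
    have "coeff (a1 m) j = coeff (W (3*m+3)) (3*j+1)" by (rule dec_coeffs(2)[OF D0[of m], of j, symmetric])
    also have "\<dots> = of_nat ((3*m+3) choose (3*j+1)) * w (3*m+3-(3*j+1))" by (rule AC)
    also have "\<dots> = of_nat ((3*m+3) choose (3*j+1)) * w (3*(m-j)+2)" by (rule reidx) simp_all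
    finally show ?thesis by (simp add: v1_def)
  qed
  have cf_a2: "coeff (a2 m) j = of_nat ((3*m+3) choose (3*j+2)) * v2 (m-j)" for m j
  proof -
    have "coeff (a2 m) j = coeff (W (3*m+3)) (3*j+2)" by (rule dec_coeffs(3)[OF D0[of m], of j, symmetric])
    also have "\<dots> = of_nat ((3*m+3) choose (3*j+2)) * w (3*m+3-(3*j+2))" by (rule AC)
    also have "\<dots> = of_nat ((3*m+3) choose (3*j+2)) * w (3*(m-j)+1)" by (rule reidx) simp_all
    finally show ?thesis by (simp add: v2_def)
  qed
  have cf_b2: "coeff (b2 m) j = of_nat ((3*m+4) choose (3*j+2)) * v1 (m-j)" for m j
  proof -
    have "coeff (b2 m) j = coeff (W (3*m+4)) (3*j+2)" by (rule dec_coeffs(3)[OF D1[of m], of j, symmetric])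
    also have "\<dots> = of_nat ((3*m+4) choose (3*j+2)) * w (3*m+4-(3*j+2))" by (rule AC)
    also have "\<dots> = of_nat ((3*m+4) choose (3*j+2)) * w (3*(m-j)+2)" by (rule reidx) simp_all
    finally show ?thesis by (simp add: v1_def)
  qed
  have cf_b1: "coeff (b1 m) j = of_nat ((3*m+1) choose (3*j+0)) * v2 (m-j)" for m j
  proof -
    have "coeff (b1 m) j = coeff (W (3*m+1)) (3*j)" by (rule dec_coeffs(1)[OF dec1[of m], of j, symmetric])
    also have "\<dots> = of_nat ((3*m+1) choose (3*j+0)) * w (3*m+1-(3*j+0))" using AC[of _ "3*j"] by simp
    also have "\<dots> = of_nat ((3*m+1) choose (3*j+0)) * w (3*(m-j)+1)" by (rule reidx) simp_all
    finally show ?thesis by (simp add: v2_def)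
  qed
  have cf_c1: "coeff (c1 m) j = of_nat ((3*m+2) choose (3*j+0)) * v1 (m-j)" for m j
  proof -
    have "coeff (c1 m) j = coeff (W (3*m+2)) (3*j)" by (rule dec_coeffs(1)[OF dec2[of m], of j, symmetric])
    also have "\<dots> = of_nat ((3*m+2) choose (3*j+0)) * w (3*m+2-(3*j+0))" using AC[of _ "3*j"] by simp
    also have "\<dots> = of_nat ((3*m+2) choose (3*j+0)) * w (3*(m-j)+2)" by (rule reidx) simp_all
    finally show ?thesis by (simp add: v1_def)
  qed
  have cf_c2: "coeff (c2 m) j = of_nat ((3*m+2) choose (3*j+1)) * v2 (m-j)" for m j
  proof -
    have "coeff (c2 m) j = coeff (W (3*m+2)) (3*j+1)" by (rule dec_coeffs(2)[OF dec2[of m], of j, symmetric])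
    also have "\<dots> = of_nat ((3*m+2) choose (3*j+1)) * w (3*m+2-(3*j+1))" by (rule AC)
    also have "\<dots> = of_nat ((3*m+2) choose (3*j+1)) * w (3*(m-j)+1)" by (rule reidx) simp_all
    finally show ?thesis by (simp add: v2_def)
  qed
  have N_a1: "(\<forall>m. a1 m = 0) \<longleftrightarrow> (\<forall>i. v1 i = 0)" by (rule null_iff[OF cf_a1]) simp
  have N_b2: "(\<forall>m. b2 m = 0) \<longleftrightarrow> (\<forall>i. v1 i = 0)" by (rule null_iff[OF cf_b2]) simp
  have N_c1: "(\<forall>m. c1 m = 0) \<longleftrightarrow> (\<forall>i. v1 i = 0)" by (rule null_iff[OF cf_c1]) simp
  have N_a2: "(\<forall>m. a2 m = 0) \<longleftrightarrow> (\<forall>i. v2 i = 0)" by (rule null_iff[OF cf_a2]) simp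
  have N_b1: "(\<forall>m. b1 m = 0) \<longleftrightarrow> (\<forall>i. v2 i = 0)" by (rule null_iff[OF cf_b1]) simp
  have N_c2: "(\<forall>m. c2 m = 0) \<longleftrightarrow> (\<forall>i. v2 i = 0)" by (rule null_iff[OF cf_c2]) simp
  have G1: "(((\<forall>n. a1 n = 0) \<and> (\<forall>n. c1 n = 0) \<and> (\<forall>n. b2 n = 0))
    \<or> ((\<exists>n. a1 n \<noteq> 0) \<and> (\<exists>n. c1 n \<noteq> 0) \<and> (\<exists>n. b2 n \<noteq> 0) \<and>
       (\<exists>(\<kappa>::nat) (\<mu>1::nat \<Rightarrow> complex) (\<mu>2::nat \<Rightarrow> complex) (\<mu>3::nat \<Rightarrow> complex)
          (hb2::nat \<Rightarrow> complex poly) (ha1::nat \<Rightarrow> complex poly) (hc1::nat \<Rightarrow> complex poly).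
          MPS hb2 \<and> MPS ha1 \<and> MPS hc1 \<and>
          (\<forall>n. b2 (n+\<kappa>) = smult (\<mu>1 n) (hb2 n)) \<and>
          (\<forall>n. a1 (n+\<kappa>) = smult (\<mu>2 n) (ha1 n)) \<and>
          (\<forall>n. c1 (n+\<kappa>) = smult (\<mu>3 n) (hc1 n)) \<and>
          (\<exists>\<beta>::complex. \<beta> \<noteq> 0 \<and>
            (\<forall>n. \<mu>1 n = pochhammer (of_nat \<kappa> + 7/3) n * pochhammer (of_nat \<kappa> + 5/3) n
                   / (pochhammer (4/3) n * pochhammer (5/3) n)
                   * of_nat ((n+\<kappa>+1) choose n) * \<beta>) \<and>
            (\<forall>n\<ge>1. \<mu>2 n = pochhammer (of_nat \<kappa> + 7/3) (n-1) * pochhammer (of_nat \<kappa> + 5/3) n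
                   / (pochhammer (4/3) n * pochhammer (5/3) (n-1))
                   * of_nat ((n+\<kappa>+1) choose n) * \<beta>) \<and>
            (\<forall>n\<ge>1. \<mu>3 n = pochhammer (of_nat \<kappa> + 7/3) (n-1) * pochhammer (of_nat \<kappa> + 5/3) n
                   / (pochhammer (4/3) (n-1) * pochhammer (5/3) (n-1))
                   * of_nat ((n+\<kappa>) choose n) * (\<beta> / (of_nat \<kappa> + 1))) \<and>
            \<mu>2 0 = 2 * \<beta> / (3 * (of_nat \<kappa> + 4/3)) \<and>
            \<mu>3 0 = 2 * \<beta> / (9 * (of_nat \<kappa> + 1) * (of_nat \<kappa> + 4/3))))))"
  proof (cases "\<forall>i. v1 i = 0")
    case True
    show ?thesis
      apply (rule disjI1)
      using True N_a1 N_b2 N_c1 by blast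
  next
    case False
    define k where "k = (LEAST i. v1 i \<noteq> 0)"
    have vk: "v1 k \<noteq> 0" using False unfolding k_def by (metis (mono_tags, lifting) LeastI_ex)
    have below: "\<forall>i<k. v1 i = 0" unfolding k_def using not_less_Least by blast
    obtain hb2 where hb2: "MPS hb2" "\<forall>n. b2 (n+k) = smult (of_nat ((3*(n+k)+4) choose (3*n+2)) * v1 k) (hb2 n)"
      using normalize[OF cf_b2 _ _ vk below] by auto
    obtain ha1 where ha1: "MPS ha1" "\<forall>n. a1 (n+k) = smult (of_nat ((3*(n+k)+3) choose (3*n+1)) * v1 k) (ha1 n)"
      using normalize[OF cf_a1 _ _ vk below] by auto
    obtain hc1 where hc1: "MPS hc1" "\<forall>n. c1 (n+k) = smult (of_nat ((3*(n+k)+2) choose (3*n+0)) * v1 k) (hc1 n)"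
      using normalize[OF cf_c1 _ _ vk below] by auto
    define m1 where "m1 n = of_nat ((3*(n+k)+4) choose (3*n+2)) * v1 k" for n
    define m2 where "m2 n = of_nat ((3*(n+k)+3) choose (3*n+1)) * v1 k" for n
    define m3 where "m3 n = of_nat ((3*(n+k)+2) choose (3*n+0)) * v1 k" for n
    define \<beta> where "\<beta> = of_nat ((3*k+4) choose 2) * v1 k"
    have bnz: "\<beta> \<noteq> 0" unfolding \<beta>_def using vk by simp
    have F1: "\<forall>n. m1 n = pochhammer (of_nat k + 7/3) n * pochhammer (of_nat k + 5/3) n
                   / (pochhammer (4/3) n * pochhammer (5/3) n)
                   * of_nat ((n+k+1) choose n) * \<beta>"
      unfolding m1_def \<beta>_def I1c by (intro allI) (simp only: mult.assoc)
    have F2: "\<forall>n\<ge>1. m2 n = pochhammer (of_nat k + 7/3) (n-1) * pochhammer (of_nat k + 5/3) n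
                   / (pochhammer (4/3) n * pochhammer (5/3) (n-1))
                   * of_nat ((n+k+1) choose n) * \<beta>"
    proof (intro allI impI)
      fix n :: nat assume "n \<ge> 1"
      then obtain m where n: "n = Suc m" by (cases n) auto
      show "m2 n = pochhammer (of_nat k + 7/3) (n-1) * pochhammer (of_nat k + 5/3) n
                   / (pochhammer (4/3) n * pochhammer (5/3) (n-1))
                   * of_nat ((n+k+1) choose n) * \<beta>"
        unfolding n m2_def \<beta>_def diff_Suc_1 I2c by (simp only: mult.assoc)
    qed
    have F3: "\<forall>n\<ge>1. m3 n = pochhammer (of_nat k + 7/3) (n-1) * pochhammer (of_nat k + 5/3) n
                   / (pochhammer (4/3) (n-1) * pochhammer (5/3) (n-1))
                   * of_nat ((n+k) choose n) * (\<beta> / (of_nat k + 1))"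
    proof (intro allI impI)
      fix n :: nat assume "n \<ge> 1"
      then obtain m where n: "n = Suc m" by (cases n) auto
      have e: "3 * Suc m + 0 = 3 * Suc m" by simp
      show "m3 n = pochhammer (of_nat k + 7/3) (n-1) * pochhammer (of_nat k + 5/3) n
                   / (pochhammer (4/3) (n-1) * pochhammer (5/3) (n-1))
                   * of_nat ((n+k) choose n) * (\<beta> / (of_nat k + 1))"
        unfolding n m3_def \<beta>_def diff_Suc_1 e I3c by (rule rr_div)
    qed
    have F4: "m2 0 = 2 * \<beta> / (3 * (of_nat k + 4/3))"
      unfolding m2_def \<beta>_def B2c by (rule rr_div2)
    have F5: "m3 0 = 2 * \<beta> / (9 * (of_nat k + 1) * (of_nat k + 4/3))"
      unfolding m3_def \<beta>_def B3c by (rule rr_div2)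
    have E1: "\<exists>n. a1 n \<noteq> 0" "\<exists>n. c1 n \<noteq> 0" "\<exists>n. b2 n \<noteq> 0"
      using False N_a1 N_b2 N_c1 by blast+
    have S1: "\<forall>n. b2 (n+k) = smult (m1 n) (hb2 n)" using hb2(2) unfolding m1_def .
    have S2: "\<forall>n. a1 (n+k) = smult (m2 n) (ha1 n)" using ha1(2) unfolding m2_def .
    have S3: "\<forall>n. c1 (n+k) = smult (m3 n) (hc1 n)" using hc1(2) unfolding m3_def .
    show ?thesis
      apply (rule disjI2)
      apply (intro conjI E1)
      apply (rule exI[of _ k], rule exI[of _ m1], rule exI[of _ m2], rule exI[of _ m3])
      apply (rule exI[of _ hb2], rule exI[of _ ha1], rule exI[of _ hc1])
      apply (intro conjI hb2(1) ha1(1) hc1(1) S1 S2 S3)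
      apply (rule exI[of _ \<beta>])
      apply (intro conjI bnz F1 F2 F3 F4 F5)
      done
  qed
  have G2: "(((\<forall>n. a2 n = 0) \<and> (\<forall>n. c2 n = 0) \<and> (\<forall>n. b1 n = 0))
    \<or> ((\<exists>n. a2 n \<noteq> 0) \<and> (\<exists>n. c2 n \<noteq> 0) \<and> (\<exists>n. b1 n \<noteq> 0) \<and>
       (\<exists>(\<tau>::nat) (\<alpha>1::nat \<Rightarrow> complex) (\<alpha>2::nat \<Rightarrow> complex) (\<alpha>3::nat \<Rightarrow> complex)
          (ha2::nat \<Rightarrow> complex poly) (hc2::nat \<Rightarrow> complex poly) (hb1::nat \<Rightarrow> complex poly).
          MPS ha2 \<and> MPS hc2 \<and> MPS hb1 \<and>
          (\<forall>n. a2 (n+\<tau>) = smult (\<alpha>1 n) (ha2 n)) \<and>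
          (\<forall>n. c2 (n+\<tau>) = smult (\<alpha>2 n) (hc2 n)) \<and>
          (\<forall>n. b1 (n+\<tau>) = smult (\<alpha>3 n) (hb1 n)) \<and>
          (\<exists>\<gamma>::complex. \<gamma> \<noteq> 0 \<and>
            (\<forall>n. \<alpha>1 n = pochhammer (of_nat \<tau> + 5/3) n * pochhammer (of_nat \<tau> + 4/3) n
                   / (pochhammer (4/3) n * pochhammer (5/3) n)
                   * of_nat ((n+\<tau>+1) choose n) * \<gamma>) \<and>
            (\<forall>n\<ge>1. \<alpha>2 n = pochhammer (of_nat \<tau> + 5/3) n * pochhammer (of_nat \<tau> + 4/3) n
                   / (pochhammer (4/3) n * pochhammer (5/3) (n-1))
                   * of_nat ((n+\<tau>) choose n) * (\<gamma> / (of_nat \<tau> + 1))) \<and>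
            (\<forall>n\<ge>1. \<alpha>3 n = pochhammer (of_nat \<tau> + 5/3) (n-1) * pochhammer (of_nat \<tau> + 4/3) n
                   / (pochhammer (4/3) (n-1) * pochhammer (5/3) (n-1))
                   * of_nat ((n+\<tau>) choose n) * (\<gamma> / (of_nat \<tau> + 1))) \<and>
            \<alpha>2 0 = 2 * \<gamma> / (3 * (of_nat \<tau> + 1)) \<and>
            \<alpha>3 0 = 2 * \<gamma> / (9 * (of_nat \<tau> + 1) * (of_nat \<tau> + 2/3))))))"
  proof (cases "\<forall>i. v2 i = 0")
    case True
    show ?thesis
      apply (rule disjI1)
      using True N_a2 N_b1 N_c2 by blast
  next
    case False
    define k where "k = (LEAST i. v2 i \<noteq> 0)"
    have vk: "v2 k \<noteq> 0" using False unfolding k_def by (metis (mono_tags, lifting) LeastI_ex)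
    have below: "\<forall>i<k. v2 i = 0" unfolding k_def using not_less_Least by blast
    obtain ha2 where ha2: "MPS ha2" "\<forall>n. a2 (n+k) = smult (of_nat ((3*(n+k)+3) choose (3*n+2)) * v2 k) (ha2 n)"
      using normalize[OF cf_a2 _ _ vk below] by auto
    obtain hc2 where hc2: "MPS hc2" "\<forall>n. c2 (n+k) = smult (of_nat ((3*(n+k)+2) choose (3*n+1)) * v2 k) (hc2 n)"
      using normalize[OF cf_c2 _ _ vk below] by auto
    obtain hb1 where hb1: "MPS hb1" "\<forall>n. b1 (n+k) = smult (of_nat ((3*(n+k)+1) choose (3*n+0)) * v2 k) (hb1 n)"
      using normalize[OF cf_b1 _ _ vk below] by auto
    define m1 where "m1 n = of_nat ((3*(n+k)+3) choose (3*n+2)) * v2 k" for n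
    define m2 where "m2 n = of_nat ((3*(n+k)+2) choose (3*n+1)) * v2 k" for n
    define m3 where "m3 n = of_nat ((3*(n+k)+1) choose (3*n+0)) * v2 k" for n
    define \<gamma> where "\<gamma> = of_nat ((3*k+3) choose 2) * v2 k"
    have gnz: "\<gamma> \<noteq> 0" unfolding \<gamma>_def using vk by simp
    have F1: "\<forall>n. m1 n = pochhammer (of_nat k + 5/3) n * pochhammer (of_nat k + 4/3) n
                   / (pochhammer (4/3) n * pochhammer (5/3) n)
                   * of_nat ((n+k+1) choose n) * \<gamma>"
      unfolding m1_def \<gamma>_def I4c by (intro allI) (simp only: mult.assoc)
    have F2: "\<forall>n\<ge>1. m2 n = pochhammer (of_nat k + 5/3) n * pochhammer (of_nat k + 4/3) n
                   / (pochhammer (4/3) n * pochhammer (5/3) (n-1))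
                   * of_nat ((n+k) choose n) * (\<gamma> / (of_nat k + 1))"
    proof (intro allI impI)
      fix n :: nat assume "n \<ge> 1"
      then obtain m where n: "n = Suc m" by (cases n) auto
      show "m2 n = pochhammer (of_nat k + 5/3) n * pochhammer (of_nat k + 4/3) n
                   / (pochhammer (4/3) n * pochhammer (5/3) (n-1))
                   * of_nat ((n+k) choose n) * (\<gamma> / (of_nat k + 1))"
        unfolding n m2_def \<gamma>_def diff_Suc_1 I5c by (rule rr_div)
    qed
    have F3: "\<forall>n\<ge>1. m3 n = pochhammer (of_nat k + 5/3) (n-1) * pochhammer (of_nat k + 4/3) n
                   / (pochhammer (4/3) (n-1) * pochhammer (5/3) (n-1))
                   * of_nat ((n+k) choose n) * (\<gamma> / (of_nat k + 1))"
    proof (intro allI impI)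
      fix n :: nat assume "n \<ge> 1"
      then obtain m where n: "n = Suc m" by (cases n) auto
      have e: "3 * Suc m + 0 = 3 * Suc m" by simp
      show "m3 n = pochhammer (of_nat k + 5/3) (n-1) * pochhammer (of_nat k + 4/3) n
                   / (pochhammer (4/3) (n-1) * pochhammer (5/3) (n-1))
                   * of_nat ((n+k) choose n) * (\<gamma> / (of_nat k + 1))"
        unfolding n m3_def \<gamma>_def diff_Suc_1 e I6c by (rule rr_div)
    qed
    have F4: "m2 0 = 2 * \<gamma> / (3 * (of_nat k + 1))"
      unfolding m2_def \<gamma>_def B5c by (rule rr_div2)
    have F5: "m3 0 = 2 * \<gamma> / (9 * (of_nat k + 1) * (of_nat k + 2/3))"
      unfolding m3_def \<gamma>_def B6c by (rule rr_div2)
    have E1: "\<exists>n. a2 n \<noteq> 0" "\<exists>n. c2 n \<noteq> 0" "\<exists>n. b1 n \<noteq> 0"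
      using False N_a2 N_b1 N_c2 by blast+
    have S1: "\<forall>n. a2 (n+k) = smult (m1 n) (ha2 n)" using ha2(2) unfolding m1_def .
    have S2: "\<forall>n. c2 (n+k) = smult (m2 n) (hc2 n)" using hc2(2) unfolding m2_def .
    have S3: "\<forall>n. b1 (n+k) = smult (m3 n) (hb1 n)" using hb1(2) unfolding m3_def .
    show ?thesis
      apply (rule disjI2)
      apply (intro conjI E1)
      apply (rule exI[of _ k], rule exI[of _ m1], rule exI[of _ m2], rule exI[of _ m3])
      apply (rule exI[of _ ha2], rule exI[of _ hc2], rule exI[of _ hb1])
      apply (intro conjI ha2(1) hc2(1) hb1(1) S1 S2 S3)
      apply (rule exI[of _ \<gamma>])
      apply (intro conjI gnz F1 F2 F3 F4 F5)
      done
  qed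
  show ?thesis using G1 G2 by (rule conjI)
qed

end
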